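(* Let $p$ be a prime, $n,s,m\ge2$, and $a,b,c,d,e,f\in\mathbb{Z}_p$. Then $T_{RN}$ is invertible over $\mathbb{Z}_p$ if and only if $$ 0\notin\mathbf{R}_{n;c,d}+\mathbf{R}_{s;a,b}+\mathbf{R}_{m;e,f}. $$
   Context: For $k\ge1$ and $t_1,t_2\in\mathbb{Z}_p$, $S_k(t_1,t_2)$ is the $k\times k$ tridiagonal matrix with zeros on the main diagonal, every subdiagonal entry (positions $(i+1,i)$) equal to $t_1$, and every superdiagonal entry (positions $(i,i+1)$) equal to $t_2$. $I_r$ is the $r\times r$ identity and $\otimes$ the Kronecker product. $M_s=I_s\otimes S_n(c,d)+S_s(a,b)\otimes I_n$ and $T_{RN}=I_m\otimes M_s+S_m(f,e)\otimes I_{ns}$. For $j\ge0$, $g_{j;t_1,t_2}(x)=\sum_{i=0}^{\lfloor j/2\rfloor}(-1)^i(t_1t_2)^i\binom{j-i}{i}x^{j-2i}$. $\mathbb{E}$ is the splitting field over $\mathbb{Z}_p$ of $g_{n;c,d},g_{s;a,b},g_{m;e,f}$ reduced mod $p$, and $\mathbf{R}_{j;t_1,t_2}$ is the set of roots in $\mathbb{E}$ of $g_{j;t_1,t_2}$ mod $p$. Minkowski sum: $S_1+S_2+S_3=\{x_1+x_2+x_3:x_i\in S_i\}$. *)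

theory Defs
  imports "Berlekamp_Zassenhaus.Finite_Field" "Jordan_Normal_Form.Matrix"
    "HOL-Computational_Algebra.Polynomial"
begin

definition tridiag :: "nat \<Rightarrow> 'a::zero \<Rightarrow> 'a \<Rightarrow> 'a mat" where
  "tridiag k t1 t2 = mat k k (\<lambda>(i,j). if i = j + 1 then t1 else if j = i + 1 then t2 else 0)"

definition kron :: "'a::times mat \<Rightarrow> 'a mat \<Rightarrow> 'a mat" where
  "kron A B = mat (dim_row A * dim_row B) (dim_col A * dim_col B)
     (\<lambda>(i,j). A $$ (i div dim_row B, j div dim_col B) * B $$ (i mod dim_row B, j mod dim_col B))"

definition M_s :: "nat \<Rightarrow> nat \<Rightarrow> 'a::comm_ring_1 \<Rightarrow> 'a \<Rightarrow> 'a \<Rightarrow> 'a \<Rightarrow> 'a mat" where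
  "M_s n s a b c d = kron (1\<^sub>m s) (tridiag n c d) + kron (tridiag s a b) (1\<^sub>m n)"

definition T_RN :: "nat \<Rightarrow> nat \<Rightarrow> nat \<Rightarrow> 'a::comm_ring_1 \<Rightarrow> 'a \<Rightarrow> 'a \<Rightarrow> 'a \<Rightarrow> 'a \<Rightarrow> 'a \<Rightarrow> 'a mat" where
  "T_RN n s m a b c d e f = kron (1\<^sub>m m) (M_s n s a b c d) + kron (tridiag m f e) (1\<^sub>m (n * s))"

definition gpoly :: "nat \<Rightarrow> 'a::comm_ring_1 \<Rightarrow> 'a \<Rightarrow> 'a poly" where
  "gpoly j t1 t2 = (\<Sum>i = 0..j div 2.
      monom ((-1) ^ i * (t1 * t2) ^ i * of_nat ((j - i) choose i)) (j - 2 * i))"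

text \<open>Canonical map Z_p \<rightarrow> a field of characteristic p (reduction mod p).\<close>
definition emb :: "'p::finite mod_ring \<Rightarrow> 'e::field" where
  "emb x = of_int (to_int_mod_ring x)"

definition splits :: "'e::field poly \<Rightarrow> bool" where
  "splits q \<longleftrightarrow> (\<exists>c rs. q = smult c (prod_mset (image_mset (\<lambda>r. [:- r, 1:]) rs)))"

definition gen_subfield :: "'e::field set \<Rightarrow> 'e set" where
  "gen_subfield S = \<Inter>{K. S \<subseteq> K \<and> 0 \<in> K \<and> 1 \<in> K \<and>
      (\<forall>x\<in>K. \<forall>y\<in>K. x + y \<in> K \<and> x - y \<in> K \<and> x * y \<in> K) \<and> (\<forall>x\<in>K. inverse x \<in> K)}"

definition roots :: "'e::field poly \<Rightarrow> 'e set" where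
  "roots q = {x. poly q x = 0}"

definition is_splitting_field :: "'e::field itself \<Rightarrow> 'p::prime_card mod_ring poly set \<Rightarrow> bool" where
  "is_splitting_field _ P \<longleftrightarrow> CHAR('e) = CARD('p) \<and>
     (\<forall>q\<in>P. splits (map_poly (emb :: 'p mod_ring \<Rightarrow> 'e) q)) \<and>
     gen_subfield (\<Union>q\<in>P. roots (map_poly (emb :: 'p mod_ring \<Rightarrow> 'e) q)) = UNIV"

end

theory Submission imports Defs "Jordan_Normal_Form.Schur_Decomposition" "Jordan_Normal_Form.DL_Rank" begin


definition trid :: "nat \<Rightarrow> 'a \<Rightarrow> 'a \<Rightarrow> 'a \<Rightarrow> 'a::comm_ring_1 mat" where
  "trid k \<alpha> \<beta> \<gamma> = mat k k (\<lambda>(i,j). if i = j then \<alpha> else if i = j+1 then \<beta> else if j = i+1 then \<gamma> else 0)"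

lemma trid_carrier[simp]: "trid k \<alpha> \<beta> \<gamma> \<in> carrier_mat k k" by (simp add: trid_def)

lemma det_trid_0: "det (trid 0 \<alpha> \<beta> \<gamma>) = 1"
  by (rule det_dim_zero, simp)

lemma det_trid_1: "det (trid (Suc 0) \<alpha> \<beta> \<gamma>) = \<alpha>"
proof -
  have "trid (Suc 0) \<alpha> \<beta> \<gamma> \<in> carrier_mat 1 1" by simp
  from det_single[OF this] show ?thesis by (simp add: trid_def)
qed

lemma det_trid_rec:
  "det (trid (Suc (Suc k)) \<alpha> \<beta> \<gamma>) = \<alpha> * det (trid (Suc k) \<alpha> \<beta> \<gamma>) - \<beta> * \<gamma> * det (trid k \<alpha> \<beta> \<gamma>)"
proof -
  let ?A = "trid (Suc (Suc k)) \<alpha> \<beta> \<gamma>"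
  have A: "?A \<in> carrier_mat (Suc (Suc k)) (Suc (Suc k))" by simp
  have d1: "mat_delete ?A (Suc k) (Suc k) = trid (Suc k) \<alpha> \<beta> \<gamma>"
    by (rule eq_matI, auto simp: mat_delete_def trid_def)
  let ?N = "mat_delete ?A k (Suc k)"
  have N: "?N \<in> carrier_mat (Suc k) (Suc k)" by (simp add: mat_delete_def trid_def)
  have d2: "mat_delete ?N k k = trid k \<alpha> \<beta> \<gamma>"
    by (rule eq_matI, auto simp: mat_delete_def trid_def)
  have "det ?N = (\<Sum>j<Suc k. ?N $$ (k,j) * cofactor ?N k j)"
    by (rule laplace_expansion_row[OF N], simp)
  also have "\<dots> = ?N $$ (k,k) * cofactor ?N k k"
    unfolding sum.lessThan_Suc by (subst sum.neutral, auto simp: mat_delete_def trid_def)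
  also have "\<dots> = \<beta> * det (trid k \<alpha> \<beta> \<gamma>)"
    unfolding cofactor_def d2 by (simp add: mat_delete_def trid_def)
  finally have dN: "det ?N = \<beta> * det (trid k \<alpha> \<beta> \<gamma>)" .
  have "det ?A = (\<Sum>i<Suc (Suc k). ?A $$ (i, Suc k) * cofactor ?A i (Suc k))"
    by (rule laplace_expansion_column[OF A], simp)
  also have "\<dots> = ?A $$ (Suc k, Suc k) * cofactor ?A (Suc k) (Suc k) + ?A $$ (k, Suc k) * cofactor ?A k (Suc k)"
    unfolding sum.lessThan_Suc by (subst sum.neutral, auto simp: trid_def)
  also have "\<dots> = \<alpha> * det (trid (Suc k) \<alpha> \<beta> \<gamma>) - \<beta> * \<gamma> * det (trid k \<alpha> \<beta> \<gamma>)"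
    unfolding cofactor_def d1 dN by (simp add: trid_def)
  finally show ?thesis .
qed

definition H :: "nat \<Rightarrow> 'a \<Rightarrow> 'a \<Rightarrow> 'a::comm_ring_1" where
  "H k x q = (\<Sum>i\<le>k. (-q)^i * of_nat ((k-i) choose i) * x^(k-2*i))"

lemma H_0: "H 0 x q = 1" by (simp add: H_def)
lemma H_1: "H (Suc 0) x q = x" by (simp add: H_def)

lemma H_rec: "H (Suc (Suc k)) x q = x * H (Suc k) x q - q * H k x q"
proof -
  define f where "f i = (-q)^(Suc i) * of_nat ((k-i) choose i) * x^(k-2*i)" for i
  define g where "g i = (-q)^(Suc i) * of_nat ((k-i) choose (Suc i)) * x^(k-2*i)" for i
  have "H (Suc (Suc k)) x q = x^(Suc (Suc k)) + (\<Sum>i\<le>Suc k. (-q)^(Suc i) * of_nat ((Suc k - i) choose Suc i) * x^(k-2*i))"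
    unfolding H_def by (subst sum.atMost_Suc_shift, simp)
  also have "(\<Sum>i\<le>Suc k. (-q)^(Suc i) * of_nat ((Suc k - i) choose Suc i) * x^(k-2*i)) = (\<Sum>i\<le>k. (-q)^(Suc i) * of_nat ((Suc k - i) choose Suc i) * x^(k-2*i))"
    by (subst sum.atMost_Suc, simp)
  also have "\<dots> = (\<Sum>i\<le>k. f i + g i)"
    by (rule sum.cong, simp, auto simp: f_def g_def Suc_diff_le algebra_simps)
  also have "\<dots> = sum f {..k} + sum g {..k}" by (rule sum.distrib)
  also have "sum f {..k} = - q * H k x q" unfolding H_def f_def
    by (simp add: sum_distrib_left algebra_simps)
  also have "x * H (Suc k) x q = x^(Suc (Suc k)) + sum g {..k}"
  proof -
    have "x * H (Suc k) x q = x * (x^Suc k + (\<Sum>i\<le>k. (-q)^(Suc i) * of_nat ((k - i) choose Suc i) * x^(k-Suc(2*i))))"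
      unfolding H_def by (subst sum.atMost_Suc_shift, simp)
    also have "\<dots> = x^(Suc (Suc k)) + (\<Sum>i\<le>k. x * ((-q)^(Suc i) * of_nat ((k - i) choose Suc i) * x^(k-Suc(2*i))))"
      by (simp add: sum_distrib_left algebra_simps)
    also have "(\<Sum>i\<le>k. x * ((-q)^(Suc i) * of_nat ((k - i) choose Suc i) * x^(k-Suc(2*i)))) = sum g {..k}"
    proof (rule sum.cong[OF refl])
      fix i assume "i \<in> {..k}"
      show "x * ((-q)^(Suc i) * of_nat ((k - i) choose Suc i) * x^(k-Suc(2*i))) = g i"
      proof (cases "k - i < Suc i")
        case True thus ?thesis by (simp add: g_def binomial_eq_0)
      next
        case False
        hence "k - 2*i = Suc (k - Suc (2*i))" by auto
        thus ?thesis by (simp add: g_def algebra_simps)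
      qed
    qed
    finally show ?thesis .
  qed
  ultimately show ?thesis by (simp add: algebra_simps)
qed



lemma det_trid_H: "det (trid k x (-\<beta>) (-\<gamma>)) = H k x (\<beta>*\<gamma>)"
proof -
  have "det (trid k x (-\<beta>) (-\<gamma>)) = H k x (\<beta>*\<gamma>) \<and> det (trid (Suc k) x (-\<beta>) (-\<gamma>)) = H (Suc k) x (\<beta>*\<gamma>)"
  proof (induction k)
    case 0 thus ?case by (simp add: det_trid_0 det_trid_1 H_0 H_1)
  next
    case (Suc k) thus ?case by (simp add: det_trid_rec H_rec)
  qed
  thus ?thesis by simp
qed

lemma char_poly_matrix_tridiag: "char_poly_matrix (tridiag k t1 t2) = trid k [:0,1:] (-[:t1:]) (-[:t2:])"
  by (rule eq_matI, auto simp: char_poly_matrix_def tridiag_def trid_def)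

lemma monom_const_mult: "monom c e = [:c:] * [:0,1:]^e"
  by (simp add: monom_altdef)

lemma const_poly_power: "[:c ^ i:] = [:c:] ^ i"
  by (simp add: poly_const_pow)

lemma gpoly_H: "gpoly j t1 t2 = H j [:0,1:] [:t1*t2:]"
proof -
  have "H j [:0,1:] [:t1*t2:] = (\<Sum>i\<le>j. monom ((-1) ^ i * (t1 * t2) ^ i * of_nat ((j - i) choose i)) (j - 2 * i))"
    unfolding H_def
  proof (rule sum.cong[OF refl])
    fix i
    show "(- [:t1 * t2:]) ^ i * of_nat (j - i choose i) * [:0, 1:] ^ (j - 2 * i) =
         monom ((- 1) ^ i * (t1 * t2) ^ i * of_nat (j - i choose i)) (j - 2 * i)"
      unfolding monom_const_mult
      by (simp add: const_poly_power[symmetric] of_nat_poly power_minus[of "[:t1*t2:]"] power_minus[of "t1*t2"] mult_ac)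
  qed
  also have "\<dots> = gpoly j t1 t2" unfolding gpoly_def
    by (rule sum.mono_neutral_right, auto simp: binomial_eq_0)
  finally show ?thesis by simp
qed

lemma char_poly_tridiag: "char_poly (tridiag k t1 t2) = gpoly k t1 t2"
  unfolding char_poly_def char_poly_matrix_tridiag det_trid_H gpoly_H by (simp add: mult.commute)



lemma triangularize:
  assumes "(A::'a::field mat) \<in> carrier_mat n n"
      and "char_poly A = (\<Prod> (e :: 'a) \<leftarrow> es. [:- e, 1:])"
  shows "\<exists>B P Q. similar_mat_wit A B P Q \<and> upper_triangular B \<and> diag_mat B = es"
  using assms
proof (induct es arbitrary: n A)
  case Nil
  with degree_monic_char_poly[of A n] have n: "n = 0" and A: "A \<in> carrier_mat 0 0" by auto
  have "similar_mat_wit A A (1\<^sub>m 0) (1\<^sub>m 0)" using similar_mat_wit_refl[OF A] .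
  moreover have "upper_triangular A" using A by auto
  moreover have "diag_mat A = []" using A by (auto simp: diag_mat_def)
  ultimately show ?case by blast
next
  case (Cons e es n A)
  let ?n1 = "n - 1"
  from Cons have A: "A \<in> carrier_mat n n" and dim: "dim_row A = n" by auto
  let ?cp = "char_poly A"
  from Cons(3)
  have cp: "?cp = [: -e, 1 :] * (\<Prod>e \<leftarrow> es. [:- e, 1:])" by auto
  have mon: "monic (\<Prod>e\<leftarrow> es. [:- e, 1:])" by (rule monic_prod_list, auto)
  have deg: "degree ?cp = Suc (degree (\<Prod>e\<leftarrow> es. [:- e, 1:]))" unfolding cp
    by (subst degree_mult_eq, insert mon, auto)
  with degree_monic_char_poly[OF A] have n: "n \<noteq> 0" by auto
  define v where "v = find_eigenvector A e"
  define b where "b = basis_completion v"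
  define W where "W = mat_of_cols n b"
  have e: "eigenvalue A e" 
    unfolding eigenvalue_root_char_poly[OF A] cp by simp
  from find_eigenvector[OF A e] have ev: "eigenvector A v e" unfolding v_def .
  from this[unfolded eigenvector_def]
  have v[simp]: "v \<in> carrier_vec n" and v0: "v \<noteq> 0\<^sub>v n" and eigen: "A *\<^sub>v v = e \<cdot>\<^sub>v v" using A by auto
  interpret vec_space "TYPE('a)" n .
  from basis_completion[OF v v0, folded b_def]
  have dist_b: "distinct b" 
    and indep: "\<not> lin_dep (set b)" and b: "set b \<subseteq> carrier_vec n" and hdb: "hd b = v" 
    and len_b: "length b = n" by auto
  have W: "W \<in> carrier_mat n n" unfolding W_def using len_b by auto
  have colsW: "cols W = b" unfolding W_def using b by simp
  have detW: "det W \<noteq> 0"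
  proof
    assume "det W = 0"
    from this[unfolded det_0_iff_vec_prod_zero_field[OF W]] obtain u where
      u: "u \<in> carrier_vec n" "u \<noteq> 0\<^sub>v n" "W *\<^sub>v u = 0\<^sub>v n" by auto
    from lin_depI[OF W u] dist_b colsW indep show False by auto
  qed
  from det_non_zero_imp_unit[OF W detW, of "()"]
  obtain W' where W': "W' \<in> carrier_mat n n" and W'W: "W' * W = 1\<^sub>m n" and WW': "W * W' = 1\<^sub>m n"
    unfolding Units_def ring_mat_def by auto
  define A' where "A' = W' * A * W"
  obtain A1 A2 A0 A3 where splitA': "split_block A' 1 1 = (A1,A2,A0,A3)"
    by (cases "split_block A' 1 1", auto)
  have A': "A' \<in> carrier_mat n n" using W W' A unfolding A'_def by auto
  have A'A_wit: "similar_mat_wit A' A W' W"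
    by (rule similar_mat_witI[of _ _ n], insert W W' A A' W'W WW', auto simp: A'_def)
  hence A'A: "similar_mat A' A" unfolding similar_mat_def by blast
  from similar_mat_wit_sym[OF A'A_wit] have simAA': "similar_mat_wit A A' W W'" by auto
  let ?f = "(\<lambda> i. if i = 0 then e else 0)"
  have colW0: "col W 0 = v" unfolding W_def using hdb len_b n b
    by (cases b, auto)
  have "col A' 0 = (W' * A) *\<^sub>v col W 0" unfolding A'_def
    by (rule col_mult2[of _ n n], insert W W' A n, auto)
  also have "\<dots> = W' *\<^sub>v (A *\<^sub>v v)" unfolding colW0 using W' A by auto
  also have "\<dots> = e \<cdot>\<^sub>v (W' *\<^sub>v v)" unfolding eigen by (rule mult_mat_vec[OF W' v])
  also have "W' *\<^sub>v v = col (W' * W) 0" unfolding colW0[symmetric]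
    by (rule col_mult2[symmetric, of _ n n], insert W W' n, auto)
  also have "\<dots> = unit_vec n 0" unfolding W'W using n by auto
  finally have col0: "col A' 0 = vec n ?f" by (intro eq_vecI, auto)
  from A' n have "dim_row A' = 1 + ?n1" "dim_col A' = 1 + ?n1" by auto
  from split_block[OF splitA' this] have A2: "A2 \<in> carrier_mat 1 ?n1"
    and A3: "A3 \<in> carrier_mat ?n1 ?n1" 
    and A'block: "A' = four_block_mat A1 A2 A0 A3" by auto
  have A1id: "A1 = mat 1 1 (\<lambda> _. e)"
    using splitA'[unfolded split_block_def Let_def] arg_cong[OF col0, of "\<lambda> v. v $ 0"] A' n
    by (auto simp: col_def)
  have A1: "A1 \<in> carrier_mat 1 1" unfolding A1id by auto
  {
    fix i
    assume "i < ?n1"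
    with arg_cong[OF col0, of "\<lambda> v. v $ Suc i"] A'
    have "A' $$ (Suc i, 0) = 0" by auto
  } note A'0 = this
  have A0id: "A0 = 0\<^sub>m ?n1 1"
    using splitA'[unfolded split_block_def Let_def] A'0 A' by auto
  have A0: "A0 \<in> carrier_mat ?n1 1" unfolding A0id by auto
  from cp char_poly_similar[OF A'A]
  have cp: "char_poly A' = [: -e,1 :] * (\<Prod> e \<leftarrow> es. [:- e, 1:])" by simp
  also have "char_poly A' = char_poly A1 * char_poly A3" 
    unfolding A'block A0id
    by (rule char_poly_four_block_zeros_col[OF A1 A2 A3])
  also have "char_poly A1 = [: -e,1 :]"
    by (simp add: A1id char_poly_defs det_def sign_def)
  finally have cp: "char_poly A3 = (\<Prod> e \<leftarrow> es. [:- e, 1:])"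
    by (metis mult_cancel_left pCons_eq_0_iff zero_neq_one)
  from Cons(1)[OF A3 cp] obtain B P' Q' where
   simIH: "similar_mat_wit A3 B P' Q'" and ut: "upper_triangular B" and diag: "diag_mat B = es" by auto
  let ?P' = "four_block_mat (1\<^sub>m 1) (0\<^sub>m 1 ?n1) (0\<^sub>m ?n1 1) P'"
  let ?Q' = "four_block_mat (1\<^sub>m 1) (0\<^sub>m 1 ?n1) (0\<^sub>m ?n1 1) Q'"
  define C where "C = four_block_mat A1 (A2 * P') A0 B"
  from similar_mat_witD2[OF A3 simIH] 
  have B: "B \<in> carrier_mat ?n1 ?n1" and P': "P' \<in> carrier_mat ?n1 ?n1" and Q': "Q' \<in> carrier_mat ?n1 ?n1" 
    and PQ': "P' * Q' = 1\<^sub>m ?n1" by auto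
  have A0_eq: "A0 = P' * A0 * 1\<^sub>m 1" unfolding A0id using P' by auto
  have simA'C: "similar_mat_wit A' C ?P' ?Q'" unfolding A'block C_def
    by (rule similar_mat_wit_four_block[OF similar_mat_wit_refl[OF A1] simIH _ A0_eq A1 A3 A0],
    insert PQ' A2 P' Q', auto)
  have ut1: "upper_triangular A1" unfolding A1id by auto
  have ut: "upper_triangular C" unfolding C_def A0id
    by (intro upper_triangular_four_block[OF _ B ut1 ut], auto simp: A1id)
  from A1id have diagA1: "diag_mat A1 = [e]" unfolding diag_mat_def by auto
  from diag_four_block_mat[OF A1 B] have diag: "diag_mat C = e # es" unfolding diag diagA1 C_def by simp
  from ut similar_mat_wit_trans[OF simAA' simA'C] diag
  show ?case by blast
qed



lemma kron_dims[simp]: "dim_row (kron A B) = dim_row A * dim_row B" "dim_col (kron A B) = dim_col A * dim_col B"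
  by (auto simp: kron_def)

lemma kron_carrier: "A \<in> carrier_mat a1 a2 \<Longrightarrow> B \<in> carrier_mat b1 b2 \<Longrightarrow> kron A B \<in> carrier_mat (a1*b1) (a2*b2)"
  by (auto simp: kron_def)

lemma kron_index: "i < dim_row A * dim_row B \<Longrightarrow> j < dim_col A * dim_col B \<Longrightarrow>
  kron A B $$ (i,j) = A $$ (i div dim_row B, j div dim_col B) * B $$ (i mod dim_row B, j mod dim_col B)"
  by (auto simp: kron_def)

lemma dm_bounds: "(i::nat) < a*b \<Longrightarrow> i div b < a \<and> i mod b < b"
  by (cases "b = 0", auto simp: less_mult_imp_div_less)

lemma sum_div_mod: fixes a b :: nat shows "(\<Sum>k<a*b. f (k div b) (k mod b)) = (\<Sum>k1<a. \<Sum>k2<b. f k1 k2)"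
proof (cases "b = 0")
  case True thus ?thesis by simp
next
  case False
  have "(\<Sum>k<a*b. f (k div b) (k mod b)) = (\<Sum>m<a. \<Sum>k\<in>{m*b..<m*b+b}. f (k div b) (k mod b))"
    by (rule sum.nat_group[symmetric])
  also have "\<dots> = (\<Sum>k1<a. \<Sum>k2<b. f k1 k2)"
  proof (rule sum.cong[OF refl])
    fix m
    have "(\<Sum>k\<in>{m*b..<m*b+b}. f (k div b) (k mod b)) = (\<Sum>k\<in>{0 + m*b..<b+m*b}. f (k div b) (k mod b))"
      by (simp add: add.commute)
    also have "\<dots> = (\<Sum>k\<in>{0..<b}. f ((k + m*b) div b) ((k + m*b) mod b))"
      by (rule sum.shift_bounds_nat_ivl)
    also have "\<dots> = (\<Sum>k2<b. f m k2)" unfolding atLeast0LessThan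
      by (rule sum.cong[OF refl], insert False, auto)
    finally show "(\<Sum>k\<in>{m*b..<m*b+b}. f (k div b) (k mod b)) = (\<Sum>k2<b. f m k2)" .
  qed
  finally show ?thesis .
qed

lemma kron_mult:
  fixes A :: "'a::comm_ring_1 mat"
  assumes A: "A \<in> carrier_mat a1 a2" and B: "B \<in> carrier_mat b1 b2"
    and C: "C \<in> carrier_mat a2 a3" and D: "D \<in> carrier_mat b2 b3"
  shows "kron A B * kron C D = kron (A * C) (B * D)"
proof (rule eq_matI)
  show "dim_row (kron A B * kron C D) = dim_row (kron (A * C) (B * D))" using A B C D by simp
  show "dim_col (kron A B * kron C D) = dim_col (kron (A * C) (B * D))" using A B C D by simp
  fix i j assume i: "i < dim_row (kron (A * C) (B * D))" and j: "j < dim_col (kron (A * C) (B * D))"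
  from i j A B C D have i': "i < a1 * b1" and j': "j < a3 * b3" by auto
  have id1: "i div b1 < a1" "i mod b1 < b1" "j div b3 < a3" "j mod b3 < b3"
    using dm_bounds[OF i'] dm_bounds[OF j'] by auto
  have "(kron A B * kron C D) $$ (i,j) = (\<Sum>k<a2*b2. kron A B $$ (i,k) * kron C D $$ (k,j))"
    using i' j' A B C D by (simp add: scalar_prod_def atLeast0LessThan)
  also have "\<dots> = (\<Sum>k<a2*b2. (A $$ (i div b1, k div b2) * C $$ (k div b2, j div b3)) * (B $$ (i mod b1, k mod b2) * D $$ (k mod b2, j mod b3)))"
    by (rule sum.cong[OF refl], insert i' j' A B C D, auto simp: kron_index)
  also have "\<dots> = (\<Sum>k1<a2. \<Sum>k2<b2. (A $$ (i div b1, k1) * C $$ (k1, j div b3)) * (B $$ (i mod b1, k2) * D $$ (k2, j mod b3)))"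
    by (rule sum_div_mod[of "\<lambda>k1 k2. (A $$ (i div b1, k1) * C $$ (k1, j div b3)) * (B $$ (i mod b1, k2) * D $$ (k2, j mod b3))"])
  also have "\<dots> = (\<Sum>k1<a2. A $$ (i div b1, k1) * C $$ (k1, j div b3)) * (\<Sum>k2<b2. B $$ (i mod b1, k2) * D $$ (k2, j mod b3))"
    by (simp add: sum_product)
  also have "\<dots> = kron (A * C) (B * D) $$ (i,j)"
    using i' j' A B C D id1 by (simp add: kron_index scalar_prod_def atLeast0LessThan)
  finally show "(kron A B * kron C D) $$ (i,j) = kron (A * C) (B * D) $$ (i,j)" .
qed

lemma kron_add_left:
  fixes A :: "'a::comm_ring_1 mat"
  assumes A: "A \<in> carrier_mat a1 a2" and A': "A' \<in> carrier_mat a1 a2" and B: "B \<in> carrier_mat b1 b2"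
  shows "kron (A + A') B = kron A B + kron A' B"
proof (rule eq_matI)
  fix i j assume "i < dim_row (kron A B + kron A' B)" "j < dim_col (kron A B + kron A' B)"
  hence i: "i < a1*b1" and j: "j < a2*b2" using A A' B by auto
  from dm_bounds[OF i] dm_bounds[OF j] A A' B i j
  show "kron (A + A') B $$ (i, j) = (kron A B + kron A' B) $$ (i, j)"
    by (simp add: kron_index distrib_right)
qed (insert assms, auto)

lemma kron_add_right:
  fixes A :: "'a::comm_ring_1 mat"
  assumes A: "A \<in> carrier_mat a1 a2" and B: "B \<in> carrier_mat b1 b2" and B': "B' \<in> carrier_mat b1 b2"
  shows "kron A (B + B') = kron A B + kron A B'"
proof (rule eq_matI)
  fix i j assume "i < dim_row (kron A B + kron A B')" "j < dim_col (kron A B + kron A B')"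
  hence i: "i < a1*b1" and j: "j < a2*b2" using A B' B by auto
  from dm_bounds[OF i] dm_bounds[OF j] A B' B i j
  show "kron A (B + B') $$ (i, j) = (kron A B + kron A B') $$ (i, j)"
    by (simp add: kron_index distrib_left)
qed (insert assms, auto)

lemma divmod_eq_iff: "((i::nat) div b = j div b \<and> i mod b = j mod b) = (i = j)"
  by (metis div_mult_mod_eq)

lemma kron_one: "kron (1\<^sub>m a) (1\<^sub>m b) = (1\<^sub>m (a*b) :: 'a::comm_ring_1 mat)"
proof (rule eq_matI)
  fix i j assume "i < dim_row (1\<^sub>m (a*b) :: 'a mat)" "j < dim_col (1\<^sub>m (a*b) :: 'a mat)"
  hence i: "i < a*b" and j: "j < a*b" by auto
  from dm_bounds[OF i] dm_bounds[OF j] have b: "i div b < a" "i mod b < b" "j div b < a" "j mod b < b" by auto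
  have "kron (1\<^sub>m a) (1\<^sub>m b) $$ (i, j) = (1\<^sub>m a :: 'a mat) $$ (i div b, j div b) * (1\<^sub>m b :: 'a mat) $$ (i mod b, j mod b)"
    using i j by (simp add: kron_index)
  also have "\<dots> = (if i div b = j div b \<and> i mod b = j mod b then 1 else 0)"
    using b by simp
  also have "\<dots> = (1\<^sub>m (a*b) :: 'a mat) $$ (i, j)" unfolding divmod_eq_iff using i j by simp
  finally show "kron (1\<^sub>m a) (1\<^sub>m b) $$ (i, j) = (1\<^sub>m (a*b) :: 'a mat) $$ (i, j)" .
qed auto

lemma divmod_less: assumes "(j::nat) < i" shows "j div b < i div b \<or> (j div b = i div b \<and> j mod b < i mod b)"
proof (cases "j div b = i div b")
  case True
  have e: "j div b * b + j mod b = j" "i div b * b + i mod b = i" by (rule div_mult_mod_eq)+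
  have "i div b * b + j mod b < i div b * b + i mod b" using e True assms by metis
  hence "j mod b < i mod b" by (rule add_less_imp_less_left)
  with True show ?thesis by simp
next
  case False
  have "j div b \<le> i div b" using assms by (intro div_le_mono, simp)
  with False show ?thesis by auto
qed

lemma kron_upper_triangular:
  fixes A :: "'a::comm_ring_1 mat"
  assumes A: "A \<in> carrier_mat a a" and B: "B \<in> carrier_mat b b"
    and uA: "upper_triangular A" and uB: "upper_triangular B"
  shows "upper_triangular (kron A B)"
proof (rule upper_triangularI)
  fix i j assume ji: "j < i" and i: "i < dim_row (kron A B)"
  hence i': "i < a*b" and j': "j < a*b" using A B by auto
  from dm_bounds[OF i'] dm_bounds[OF j'] have bb: "i div b < a" "i mod b < b" "j div b < a" "j mod b < b" by auto
  have kk: "kron A B $$ (i, j) = A $$ (i div b, j div b) * B $$ (i mod b, j mod b)"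
    using i' j' A B by (simp add: kron_index)
  from divmod_less[OF ji, of b]
  show "kron A B $$ (i, j) = 0"
  proof
    assume "j div b < i div b"
    hence "A $$ (i div b, j div b) = 0" using uA A bb by (auto intro: upper_triangularD)
    thus ?thesis using kk by simp
  next
    assume "j div b = i div b \<and> j mod b < i mod b"
    hence "B $$ (i mod b, j mod b) = 0" using uB B bb by (auto intro: upper_triangularD)
    thus ?thesis using kk by simp
  qed
qed

lemma kron_diag:
  fixes A :: "'a::comm_ring_1 mat"
  assumes A: "A \<in> carrier_mat a a" and B: "B \<in> carrier_mat b b" and i: "i < a*b"
  shows "kron A B $$ (i,i) = A $$ (i div b, i div b) * B $$ (i mod b, i mod b)"
  using assms by (simp add: kron_index)



lemma emb_hom:
  assumes "CHAR('e::field) = CARD('p::prime_card)"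
  shows "comm_ring_hom (emb :: 'p mod_ring \<Rightarrow> 'e)"
proof
  show "(emb :: 'p mod_ring \<Rightarrow> 'e) 1 = 1" unfolding emb_def by simp
  show "(emb :: 'p mod_ring \<Rightarrow> 'e) 0 = 0" unfolding emb_def by simp
  fix x y :: "'p mod_ring"
  have "(emb (x + y) :: 'e) = of_int ((to_int_mod_ring x + to_int_mod_ring y) mod int CHAR('e))"
    unfolding emb_def to_int_mod_ring_add assms ..
  also have "\<dots> = emb x + emb y" unfolding of_int_mod_CHAR emb_def by simp
  finally show "(emb (x + y) :: 'e) = emb x + emb y" .
  have "(emb (x * y) :: 'e) = of_int ((to_int_mod_ring x * to_int_mod_ring y) mod int CHAR('e))"
    unfolding emb_def to_int_mod_ring_mult assms ..
  also have "\<dots> = emb x * emb y" unfolding of_int_mod_CHAR emb_def by simp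
  finally show "(emb (x * y) :: 'e) = emb x * emb y" .
qed

lemma emb_inj0:
  assumes "CHAR('e::field) = CARD('p::prime_card)" and "(emb (x :: 'p mod_ring) :: 'e) = 0"
  shows "x = 0"
proof (rule ccontr)
  interpret comm_ring_hom "emb :: 'p mod_ring \<Rightarrow> 'e" by (rule emb_hom[OF assms(1)])
  assume "x \<noteq> 0"
  hence "(emb (x * inverse x) :: 'e) = 1" by simp
  thus False using assms(2) by (simp add: hom_mult)
qed

lemma invertible_iff_det:
  assumes A: "(A :: 'a::field mat) \<in> carrier_mat n n"
  shows "invertible_mat A \<longleftrightarrow> det A \<noteq> 0"
proof
  assume "invertible_mat A"
  then obtain B where AB: "A * B = 1\<^sub>m (dim_row A)" and BA: "B * A = 1\<^sub>m (dim_row B)"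
    unfolding invertible_mat_def inverts_mat_def by auto
  have "dim_col B = n" using AB A by (metis carrier_matD index_mult_mat(3) index_one_mat(3))
  moreover have "dim_row B = n" using BA A by (metis carrier_matD index_mult_mat(3) index_one_mat(3))
  ultimately have B: "B \<in> carrier_mat n n" by auto
  have "det A * det B = 1" using det_mult[OF A B] AB A by simp
  thus "det A \<noteq> 0" by auto
next
  assume "det A \<noteq> 0"
  from det_non_zero_imp_unit[OF A this, of "()"]
  obtain B where B: "B \<in> carrier_mat n n" and "B * A = 1\<^sub>m n" "A * B = 1\<^sub>m n"
    unfolding Units_def ring_mat_def by auto
  thus "invertible_mat A" using A unfolding invertible_mat_def inverts_mat_def square_mat.simps by auto
qed

lemma tridiag_carrier[simp]: "tridiag k t1 t2 \<in> carrier_mat k k" by (simp add: tridiag_def)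

context comm_ring_hom
begin

lemma map_kron: "map_mat hom (kron A B) = kron (map_mat hom A) (map_mat hom B)"
  by (rule eq_matI, auto simp: kron_index dm_bounds hom_mult)

lemma map_add_mat: "A \<in> carrier_mat r c \<Longrightarrow> B \<in> carrier_mat r c \<Longrightarrow> map_mat hom (A + B) = map_mat hom A + map_mat hom B"
  by (rule eq_matI, auto simp: hom_add)

lemma map_one_mat: "map_mat hom (1\<^sub>m k) = 1\<^sub>m k"
  by (rule eq_matI, auto)

lemma map_tridiag: "map_mat hom (tridiag k t1 t2) = tridiag k (hom t1) (hom t2)"
  by (rule eq_matI, auto simp: tridiag_def)

lemma map_T_RN: "map_mat hom (T_RN n s m a b c d e f) = T_RN n s m (hom a) (hom b) (hom c) (hom d) (hom e) (hom f)"
proof -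
  have M: "M_s n s a b c d \<in> carrier_mat (s*n) (s*n)" unfolding M_s_def
    by (rule add_carrier_mat; rule kron_carrier, auto)
  have mM: "map_mat hom (M_s n s a b c d) = M_s n s (hom a) (hom b) (hom c) (hom d)"
    unfolding M_s_def by (subst map_add_mat[of _ "s*n" "s*n"], (rule kron_carrier, auto)+,
      simp add: map_kron map_one_mat map_tridiag)
  show ?thesis unfolding T_RN_def
    by (subst map_add_mat[of _ "m*(s*n)" "m*(s*n)"], rule kron_carrier[OF one_carrier_mat M],
      rule kron_carrier, auto simp: map_kron map_one_mat map_tridiag mM)
qed

end



lemma kron_conj:
  fixes P1 :: "'a::comm_ring_1 mat"
  assumes "P1 \<in> carrier_mat a a" "X1 \<in> carrier_mat a a" "Q1 \<in> carrier_mat a a"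
    "P2 \<in> carrier_mat b b" "X2 \<in> carrier_mat b b" "Q2 \<in> carrier_mat b b"
  shows "kron P1 P2 * kron X1 X2 * kron Q1 Q2 = kron (P1 * X1 * Q1) (P2 * X2 * Q2)"
  using assms by (simp add: kron_mult[of _ a a _ b b _ a _ b])

lemma conj_add:
  fixes P :: "'a::comm_ring_1 mat"
  assumes "P \<in> carrier_mat k k" "X \<in> carrier_mat k k" "Y \<in> carrier_mat k k" "Q \<in> carrier_mat k k"
  shows "P * (X + Y) * Q = P * X * Q + P * Y * Q"
  using assms by (simp add: mult_add_distrib_mat[of _ k k] add_mult_distrib_mat[of _ k k])

lemma upper_triangular_add:
  fixes A :: "'a::comm_ring_1 mat"
  assumes "A \<in> carrier_mat k k" "B \<in> carrier_mat k k" "upper_triangular A" "upper_triangular B"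
  shows "upper_triangular (A + B)"
proof (rule upper_triangularI)
  fix i j assume "j < i" "i < dim_row (A + B)"
  thus "(A + B) $$ (i, j) = 0" using assms by (simp add: upper_triangularD)
qed

lemma main_field:
  fixes a b c d e f :: "'a::field"
  assumes cA: "char_poly (tridiag n c d) = (\<Prod>x\<leftarrow>esA. [:-x,1:])"
    and cB: "char_poly (tridiag s a b) = (\<Prod>x\<leftarrow>esB. [:-x,1:])"
    and cC: "char_poly (tridiag m f e) = (\<Prod>x\<leftarrow>esC. [:-x,1:])"
  shows "det (T_RN n s m a b c d e f) = 0 \<longleftrightarrow> (\<exists>x1\<in>set esA. \<exists>x2\<in>set esB. \<exists>x3\<in>set esC. x1+x2+x3 = 0)"
proof -
  let ?A = "tridiag n c d" let ?B = "tridiag s a b" let ?C = "tridiag m f e"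
  from triangularize[OF tridiag_carrier cA] obtain Ua Pa Qa where
    sA: "similar_mat_wit ?A Ua Pa Qa" and uA: "upper_triangular Ua" and dA: "diag_mat Ua = esA" by blast
  from triangularize[OF tridiag_carrier cB] obtain Ub Pb Qb where
    sB: "similar_mat_wit ?B Ub Pb Qb" and uB: "upper_triangular Ub" and dB: "diag_mat Ub = esB" by blast
  from triangularize[OF tridiag_carrier cC] obtain Uc Pc Qc where
    sC: "similar_mat_wit ?C Uc Pc Qc" and uC: "upper_triangular Uc" and dC: "diag_mat Uc = esC" by blast
  note wA = similar_mat_witD2[OF tridiag_carrier sA]
  note wB = similar_mat_witD2[OF tridiag_carrier sB]
  note wC = similar_mat_witD2[OF tridiag_carrier sC]
  have Ua: "Ua \<in> carrier_mat n n" and Pa: "Pa \<in> carrier_mat n n" and Qa: "Qa \<in> carrier_mat n n" using wA by auto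
  have Ub: "Ub \<in> carrier_mat s s" and Pb: "Pb \<in> carrier_mat s s" and Qb: "Qb \<in> carrier_mat s s" using wB by auto
  have Uc: "Uc \<in> carrier_mat m m" and Pc: "Pc \<in> carrier_mat m m" and Qc: "Qc \<in> carrier_mat m m" using wC by auto
  have one: "\<And>k. (1\<^sub>m k :: 'a mat) \<in> carrier_mat k k" by simp
  define Pab where "Pab = kron Pb Pa"
  define Qab where "Qab = kron Qb Qa"
  define Mu where "Mu = kron (1\<^sub>m s) Ua + kron Ub (1\<^sub>m n)"
  define P where "P = kron Pc Pab"
  define Q where "Q = kron Qc Qab"
  define W where "W = kron (1\<^sub>m m) Mu + kron Uc (1\<^sub>m (s*n))"
  have Pab: "Pab \<in> carrier_mat (s*n) (s*n)" unfolding Pab_def by (rule kron_carrier[OF Pb Pa])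
  have Qab: "Qab \<in> carrier_mat (s*n) (s*n)" unfolding Qab_def by (rule kron_carrier[OF Qb Qa])
  have k1: "kron (1\<^sub>m s) Ua \<in> carrier_mat (s*n) (s*n)" by (rule kron_carrier[OF one Ua])
  have k2: "kron Ub (1\<^sub>m n) \<in> carrier_mat (s*n) (s*n)" by (rule kron_carrier[OF Ub one])
  have Mu: "Mu \<in> carrier_mat (s*n) (s*n)" unfolding Mu_def using k1 k2 by simp
  have P: "P \<in> carrier_mat (m*(s*n)) (m*(s*n))" unfolding P_def by (rule kron_carrier[OF Pc Pab])
  have Q: "Q \<in> carrier_mat (m*(s*n)) (m*(s*n))" unfolding Q_def by (rule kron_carrier[OF Qc Qab])
  have k3: "kron (1\<^sub>m m) Mu \<in> carrier_mat (m*(s*n)) (m*(s*n))" by (rule kron_carrier[OF one Mu])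
  have k4: "kron Uc (1\<^sub>m (s*n)) \<in> carrier_mat (m*(s*n)) (m*(s*n))" by (rule kron_carrier[OF Uc one])
  have W: "W \<in> carrier_mat (m*(s*n)) (m*(s*n))" unfolding W_def using k3 k4 by simp
  have PQa: "Pa * Qa = 1\<^sub>m n" and PQb: "Pb * Qb = 1\<^sub>m s" and PQc: "Pc * Qc = 1\<^sub>m m" using wA wB wC by auto
  have Aeq: "?A = Pa * Ua * Qa" and Beq: "?B = Pb * Ub * Qb" and Ceq: "?C = Pc * Uc * Qc" using wA wB wC by auto
  have PQab: "Pab * Qab = 1\<^sub>m (s*n)" unfolding Pab_def Qab_def
    by (subst kron_mult[OF Pb Pa Qb Qa], simp add: PQa PQb kron_one)
  have Mconj: "Pab * Mu * Qab = M_s n s a b c d"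
  proof -
    have "Pab * Mu * Qab = Pab * kron (1\<^sub>m s) Ua * Qab + Pab * kron Ub (1\<^sub>m n) * Qab"
      unfolding Mu_def by (rule conj_add[OF Pab k1 k2 Qab])
    also have "Pab * kron (1\<^sub>m s) Ua * Qab = kron (Pb * 1\<^sub>m s * Qb) (Pa * Ua * Qa)"
      unfolding Pab_def Qab_def by (rule kron_conj[OF Pb one Qb Pa Ua Qa])
    also have "Pab * kron Ub (1\<^sub>m n) * Qab = kron (Pb * Ub * Qb) (Pa * 1\<^sub>m n * Qa)"
      unfolding Pab_def Qab_def by (rule kron_conj[OF Pb Ub Qb Pa one Qa])
    finally show ?thesis unfolding M_s_def Aeq[symmetric] Beq[symmetric] using Pa Pb PQa PQb by simp
  qed
  have TPWQ: "T_RN n s m a b c d e f = P * W * Q"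
  proof -
    have "P * W * Q = P * kron (1\<^sub>m m) Mu * Q + P * kron Uc (1\<^sub>m (s*n)) * Q"
      unfolding W_def by (rule conj_add[OF P k3 k4 Q])
    also have "P * kron (1\<^sub>m m) Mu * Q = kron (Pc * 1\<^sub>m m * Qc) (Pab * Mu * Qab)"
      unfolding P_def Q_def by (rule kron_conj[OF Pc one Qc Pab Mu Qab])
    also have "P * kron Uc (1\<^sub>m (s*n)) * Q = kron (Pc * Uc * Qc) (Pab * 1\<^sub>m (s*n) * Qab)"
      unfolding P_def Q_def by (rule kron_conj[OF Pc Uc Qc Pab one Qab])
    finally have "P * W * Q = kron (1\<^sub>m m) (M_s n s a b c d) + kron ?C (1\<^sub>m (s*n))"
      unfolding Mconj Ceq[symmetric] using Pc PQc Pab PQab by simp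
    also have "s * n = n * s" by simp
    finally show ?thesis unfolding T_RN_def by simp
  qed
  have PQ: "P * Q = 1\<^sub>m (m*(s*n))" unfolding P_def Q_def
    by (subst kron_mult[OF Pc Pab Qc Qab], simp add: PQc PQab kron_one)
  have "det (T_RN n s m a b c d e f) = det P * det W * det Q"
    unfolding TPWQ using P W Q by (simp add: det_mult[of _ "m*(s*n)"])
  also have "\<dots> = det W * det (P * Q)" using P Q by (simp add: det_mult[of _ "m*(s*n)"])
  finally have detT: "det (T_RN n s m a b c d e f) = det W" unfolding PQ by simp
  have uMu: "upper_triangular Mu" unfolding Mu_def
    by (rule upper_triangular_add[OF k1 k2]; rule kron_upper_triangular, insert Ua Ub uA uB, auto)
  have uW: "upper_triangular W" unfolding W_def
    by (rule upper_triangular_add[OF k3 k4]; rule kron_upper_triangular, insert Mu Uc uMu uC, auto)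
  have detW: "det W = prod_list (diag_mat W)" by (rule det_upper_triangular[OF uW W])
  have Wdiag: "W $$ (i,i) = Ua $$ (i mod (s*n) mod n, i mod (s*n) mod n) + Ub $$ (i mod (s*n) div n, i mod (s*n) div n)
     + Uc $$ (i div (s*n), i div (s*n))" if i: "i < m*(s*n)" for i
  proof -
    from dm_bounds[OF i] have i1: "i div (s*n) < m" and i2: "i mod (s*n) < s*n" by auto
    have "W $$ (i,i) = kron (1\<^sub>m m) Mu $$ (i,i) + kron Uc (1\<^sub>m (s*n)) $$ (i,i)"
      unfolding W_def using k4 i Uc by (subst index_add_mat(1), auto)
    also have "\<dots> = Mu $$ (i mod (s*n), i mod (s*n)) + Uc $$ (i div (s*n), i div (s*n))"
      using i k3 k4 kron_diag[OF one Mu i] kron_diag[OF Uc one i] i1 i2 by simp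
    finally have "W $$ (i,i) = Mu $$ (i mod (s*n), i mod (s*n)) + Uc $$ (i div (s*n), i div (s*n))" .
    also have "Mu $$ (i mod (s*n), i mod (s*n)) = Ua $$ (i mod (s*n) mod n, i mod (s*n) mod n) + Ub $$ (i mod (s*n) div n, i mod (s*n) div n)"
      unfolding Mu_def using k1 k2 i2 Ub by (subst index_add_mat(1), auto simp: kron_diag[OF one Ua i2] kron_diag[OF Ub one i2] dm_bounds[OF i2])
    finally show ?thesis by simp
  qed
  have lenA: "length esA = n" and lenB: "length esB = s" and lenC: "length esC = m"
    using dA dB dC Ua Ub Uc by (auto simp: diag_mat_def)
  have setA: "set esA = (\<lambda>i. Ua $$ (i,i)) ` {..<n}" unfolding dA[symmetric] using Ua by (auto simp: diag_mat_def)
  have setB: "set esB = (\<lambda>i. Ub $$ (i,i)) ` {..<s}" unfolding dB[symmetric] using Ub by (auto simp: diag_mat_def)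
  have setC: "set esC = (\<lambda>i. Uc $$ (i,i)) ` {..<m}" unfolding dC[symmetric] using Uc by (auto simp: diag_mat_def)
  have "det (T_RN n s m a b c d e f) = 0 \<longleftrightarrow> (\<exists>i < m*(s*n). W $$ (i,i) = 0)"
    unfolding detT detW prod_list_zero_iff using W by (auto simp: diag_mat_def)
  also have "\<dots> \<longleftrightarrow> (\<exists>i3<n. \<exists>i2<s. \<exists>i1<m. Ua $$ (i3,i3) + Ub $$ (i2,i2) + Uc $$ (i1,i1) = 0)"
  proof
    assume "\<exists>i < m*(s*n). W $$ (i,i) = 0"
    then obtain i where i: "i < m*(s*n)" and z: "W $$ (i,i) = 0" by auto
    from dm_bounds[OF i] have i1: "i div (s*n) < m" and i2: "i mod (s*n) < s*n" by auto
    from dm_bounds[OF i2] have "i mod (s*n) div n < s" by (simp add: mult.commute)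
    moreover from dm_bounds[of "i mod (s*n)" s n] i2 have "i mod (s*n) mod n < n" by simp
    ultimately show "\<exists>i3<n. \<exists>i2<s. \<exists>i1<m. Ua $$ (i3,i3) + Ub $$ (i2,i2) + Uc $$ (i1,i1) = 0"
    proof -
      assume f2: "i mod (s*n) div n < s" and f3: "i mod (s*n) mod n < n"
      have zz: "Ua $$ (i mod (s*n) mod n, i mod (s*n) mod n) + Ub $$ (i mod (s*n) div n, i mod (s*n) div n)
     + Uc $$ (i div (s*n), i div (s*n)) = 0" using z Wdiag[OF i] by simp
      show ?thesis using f2 f3 i1 zz by blast
    qed
  next
    assume "\<exists>i3<n. \<exists>i2<s. \<exists>i1<m. Ua $$ (i3,i3) + Ub $$ (i2,i2) + Uc $$ (i1,i1) = 0"
    then obtain i1 i2 i3 where i1: "i1 < m" and i2: "i2 < s" and i3: "i3 < n"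
      and z: "Ua $$ (i3,i3) + Ub $$ (i2,i2) + Uc $$ (i1,i1) = 0" by auto
    define j where "j = i2 * n + i3"
    have "i2 * n + i3 < i2 * n + n" using i3 by simp
    also have "\<dots> = Suc i2 * n" by simp
    also have "\<dots> \<le> s * n" using i2 by (intro mult_le_mono1, simp)
    finally have j: "j < s*n" unfolding j_def .
    define i where "i = i1 * (s*n) + j"
    have "i1 * (s*n) + j < i1 * (s*n) + s*n" using j by simp
    also have "\<dots> = Suc i1 * (s*n)" by simp
    also have "\<dots> \<le> m * (s*n)" using i1 by (intro mult_le_mono1, simp)
    finally have i: "i < m*(s*n)" unfolding i_def .
    have k0: "s*n \<noteq> 0" using j by (metis less_zeroE)
    have ii: "i = j + i1*(s*n)" unfolding i_def by simp
    have "i div (s*n) = i1" unfolding ii div_mult_self1[OF k0] using j by simp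
    moreover have "i mod (s*n) = j" unfolding ii using j by simp
    moreover have n0: "n \<noteq> 0" using i3 by auto
    have jj: "j = i3 + i2*n" unfolding j_def by simp
    have "j div n = i2" unfolding jj div_mult_self1[OF n0] using i3 by simp
    moreover have "j mod n = i3" unfolding jj using i3 by simp
    ultimately have "W $$ (i,i) = 0" unfolding Wdiag[OF i] using z by simp
    with i show "\<exists>i < m*(s*n). W $$ (i,i) = 0" by auto
  qed
  also have "\<dots> \<longleftrightarrow> (\<exists>x1\<in>set esA. \<exists>x2\<in>set esB. \<exists>x3\<in>set esC. x1+x2+x3 = 0)"
    unfolding setA setB setC by blast
  finally show ?thesis .
qed



lemma split_monic:
  fixes q :: "'a::field poly"
  assumes "splits q" "lead_coeff q = 1"
  shows "\<exists>es. q = (\<Prod>x\<leftarrow>es. [:-x,1:])"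
proof -
  from assms(1) obtain c rs where q: "q = smult c (prod_mset (image_mset (\<lambda>r. [:- r, 1:]) rs))"
    unfolding splits_def by auto
  obtain es where rs: "rs = mset es" using ex_mset[of rs] by metis
  have pe: "prod_mset (image_mset (\<lambda>r. [:- r, 1:]) rs) = (\<Prod>x\<leftarrow>es. [:-x,1:])"
    unfolding rs mset_map[symmetric] prod_mset_prod_list ..
  have mon: "monic (\<Prod>x\<leftarrow>es. [:-x,1:])" by (rule monic_prod_list, auto)
  have "lead_coeff q = c" unfolding q pe lead_coeff_smult using mon by simp
  with assms(2) have "c = 1" by simp
  thus ?thesis unfolding q pe by auto
qed

lemma roots_prod: "roots (\<Prod>x\<leftarrow>es. [:-x,1:]) = set (es :: 'a::field list)"
  unfolding roots_def poly_prod_list by (induct es, auto)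

theorem corollary4p3:
  fixes a b c d e f :: "'p::prime_card mod_ring"
    and n s m :: nat
  assumes "n \<ge> 2" "s \<ge> 2" "m \<ge> 2"
    and "is_splitting_field TYPE('e::field) {gpoly n c d, gpoly s a b, gpoly m e f}"
  shows "invertible_mat (T_RN n s m a b c d e f) \<longleftrightarrow>
    (0::'e) \<notin> {x1 + x2 + x3 | x1 x2 x3.
        x1 \<in> roots (map_poly emb (gpoly n c d)) \<and>
        x2 \<in> roots (map_poly emb (gpoly s a b)) \<and>
        x3 \<in> roots (map_poly emb (gpoly m e f))}"
proof -
  from assms(4)[unfolded is_splitting_field_def]
  have char: "CHAR('e) = CARD('p)"
    and spA: "splits (map_poly (emb :: 'p mod_ring \<Rightarrow> 'e) (gpoly n c d))"
    and spB: "splits (map_poly (emb :: 'p mod_ring \<Rightarrow> 'e) (gpoly s a b))"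
    and spC: "splits (map_poly (emb :: 'p mod_ring \<Rightarrow> 'e) (gpoly m e f))" by auto
  interpret h: comm_ring_hom "emb :: 'p mod_ring \<Rightarrow> 'e" by (rule emb_hom[OF char])
  have cp: "char_poly (tridiag k (emb t1) (emb t2) :: 'e mat) = map_poly emb (gpoly k t1 t2)" for k and t1 t2 :: "'p mod_ring"
    using h.char_poly_hom[OF tridiag_carrier, of k t1 t2] unfolding h.map_tridiag char_poly_tridiag .
  have gC: "gpoly m e f = gpoly m f e" unfolding gpoly_def by (simp add: mult.commute)
  have lc: "lead_coeff (map_poly (emb :: 'p mod_ring \<Rightarrow> 'e) (gpoly k t1 t2)) = 1" for k and t1 t2 :: "'p mod_ring"
    using degree_monic_char_poly[OF tridiag_carrier, of k "emb t1 :: 'e" "emb t2"] unfolding cp by simp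
  from split_monic[OF spA lc] obtain esA where eA: "map_poly (emb :: 'p mod_ring \<Rightarrow> 'e) (gpoly n c d) = (\<Prod>x\<leftarrow>esA. [:-x,1:])" by blast
  from split_monic[OF spB lc] obtain esB where eB: "map_poly (emb :: 'p mod_ring \<Rightarrow> 'e) (gpoly s a b) = (\<Prod>x\<leftarrow>esB. [:-x,1:])" by blast
  from split_monic[OF spC lc] obtain esC where eC: "map_poly (emb :: 'p mod_ring \<Rightarrow> 'e) (gpoly m e f) = (\<Prod>x\<leftarrow>esC. [:-x,1:])" by blast
  have main: "det (T_RN n s m (emb a) (emb b) (emb c) (emb d) (emb e) (emb f) :: 'e mat) = 0 \<longleftrightarrow>
     (\<exists>x1\<in>set esA. \<exists>x2\<in>set esB. \<exists>x3\<in>set esC. x1+x2+x3 = 0)"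
    by (rule main_field, unfold cp, rule eA, rule eB, unfold gC[symmetric], rule eC)
  have T: "T_RN n s m a b c d e f \<in> carrier_mat (m*(n*s)) (m*(n*s))"
    unfolding T_RN_def M_s_def by (simp add: kron_carrier)
  have "invertible_mat (T_RN n s m a b c d e f) \<longleftrightarrow> det (T_RN n s m a b c d e f) \<noteq> 0"
    by (rule invertible_iff_det[OF T])
  also have "\<dots> \<longleftrightarrow> (emb (det (T_RN n s m a b c d e f)) :: 'e) \<noteq> 0"
    using emb_inj0[OF char] by auto
  also have "(emb (det (T_RN n s m a b c d e f)) :: 'e) = det (T_RN n s m (emb a) (emb b) (emb c) (emb d) (emb e) (emb f))"
    unfolding h.hom_det[symmetric] h.map_T_RN ..
  also note main
  also have "(\<not> (\<exists>x1\<in>set esA. \<exists>x2\<in>set esB. \<exists>x3\<in>set esC. x1+x2+x3 = 0)) \<longleftrightarrow>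
    (0::'e) \<notin> {x1 + x2 + x3 | x1 x2 x3.
        x1 \<in> roots (map_poly emb (gpoly n c d)) \<and>
        x2 \<in> roots (map_poly emb (gpoly s a b)) \<and>
        x3 \<in> roots (map_poly emb (gpoly m e f))}"
    unfolding eA eB eC roots_prod by force
  finally show ?thesis .
qed

end
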